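(* Let $R$ be a commutative domain with unit, let $f\in R$ be nonzero and non-invertible, and let $S=R[u,v]/(uv-f)$, with $R$ regarded as a subring of $S$. Let $a\in R$. Then: (i) if $a$ is irreducible in $S$, then $a$ is irreducible in $R$; (ii) if $a$ is irreducible in $R$ and not associated with $f$ in $R$, then $a$ is irreducible in $S$. *)

theory Defs
  imports "HOL-Algebra.Algebra"
begin

text \<open>The polynomial ring R[u,v], realised as (R[u])[v] via the univariate
  polynomial construction of HOL-Algebra.\<close>

abbreviation Ruv :: "('a, 'm) ring_scheme \<Rightarrow> (nat \<Rightarrow> 'a, nat \<Rightarrow> nat \<Rightarrow> 'a) up_ring"
  where "Ruv R \<equiv> UP (UP R)"

definition const_uv :: "('a, 'm) ring_scheme \<Rightarrow> 'a \<Rightarrow> nat \<Rightarrow> nat \<Rightarrow> 'a"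
  where "const_uv R a = monom (Ruv R) (monom (UP R) a 0) 0"

definition var_u :: "('a, 'm) ring_scheme \<Rightarrow> nat \<Rightarrow> nat \<Rightarrow> 'a"
  where "var_u R = monom (Ruv R) (monom (UP R) \<one>\<^bsub>R\<^esub> 1) 0"

definition var_v :: "('a, 'm) ring_scheme \<Rightarrow> nat \<Rightarrow> nat \<Rightarrow> 'a"
  where "var_v R = monom (Ruv R) \<one>\<^bsub>UP R\<^esub> 1"

definition uv_ideal :: "('a, 'm) ring_scheme \<Rightarrow> 'a \<Rightarrow> (nat \<Rightarrow> nat \<Rightarrow> 'a) set"
  where "uv_ideal R f =
     PIdl\<^bsub>Ruv R\<^esub> (var_u R \<otimes>\<^bsub>Ruv R\<^esub> var_v R \<ominus>\<^bsub>Ruv R\<^esub> const_uv R f)"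

definition S_ring :: "('a, 'm) ring_scheme \<Rightarrow> 'a \<Rightarrow> (nat \<Rightarrow> nat \<Rightarrow> 'a) set ring"
  where "S_ring R f = Ruv R Quot uv_ideal R f"

definition to_S :: "('a, 'm) ring_scheme \<Rightarrow> 'a \<Rightarrow> 'a \<Rightarrow> (nat \<Rightarrow> nat \<Rightarrow> 'a) set"
  where "to_S R f a = uv_ideal R f +>\<^bsub>Ruv R\<^esub> const_uv R a"

end

theory Submission
  imports Defs
begin
locale lctx =
  fixes R (structure) and f
  assumes dom: "domain R" and fc: "f \<in> carrier R" and fnz: "f \<noteq> \<zero>" and fnu: "f \<notin> Units R"
begin

sublocale domain R by (rule dom)

sublocale P: UP_domain R "UP R" by unfold_locales

lemma P_dom: "domain (UP R)" by (rule P.UP_domain)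

sublocale Q: UP_domain "UP R" "UP (UP R)" by (rule UP_domain.intro, rule P_dom)

abbreviation "PR \<equiv> UP R"
abbreviation "QR \<equiv> UP (UP R)"
abbreviation "XX \<equiv> up_ring.monom PR \<one> 1"
abbreviation "II \<equiv> uv_ideal R f"
abbreviation "SS \<equiv> S_ring R f"
abbreviation "gg \<equiv> var_u R \<otimes>\<^bsub>QR\<^esub> var_v R \<ominus>\<^bsub>QR\<^esub> const_uv R f"

definition "qp = (\<lambda>p. II +>\<^bsub>QR\<^esub> p)"
definition "iu = (\<lambda>A. up_ring.monom QR A 0)"
definition "hc = (\<lambda>r. up_ring.monom QR (up_ring.monom PR r 0) 0)"
definition "iv = UnivPoly.eval R QR hc (var_v R)"
definition "hu = qp \<circ> iu"
definition "hv = qp \<circ> iv"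
definition "cS r = to_S R f r"
abbreviation "U \<equiv> qp (var_u R)"
abbreviation "V \<equiv> qp (var_v R)"

lemma X_closed: "XX \<in> carrier PR" by simp

lemma var_u_closed: "var_u R \<in> carrier QR" unfolding var_u_def by simp
lemma var_v_closed: "var_v R \<in> carrier QR" unfolding var_v_def by simp
lemma const_closed: "r \<in> carrier R \<Longrightarrow> const_uv R r \<in> carrier QR" unfolding const_uv_def by simp
lemma gg_closed: "gg \<in> carrier QR"
  using var_u_closed var_v_closed const_closed[OF fc] by simp

lemma QR_cring: "cring QR" by (rule Q.UP_cring)

lemma II_ideal: "ideal II QR"
  unfolding uv_ideal_def by (rule cring.cgenideal_ideal[OF QR_cring gg_closed])

lemma S_cring: "cring SS"
  unfolding S_ring_def by (rule ideal.quotient_is_cring[OF II_ideal QR_cring])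

lemma qp_hom: "qp \<in> ring_hom QR SS"
  unfolding qp_def S_ring_def by (rule ideal.rcos_ring_hom[OF II_ideal])

lemma hc_hom: "hc \<in> ring_hom R QR"
proof -
  have "hc = (\<lambda>A. up_ring.monom QR A 0) \<circ> (\<lambda>r. up_ring.monom PR r 0)" unfolding hc_def by auto
  then show ?thesis using ring_hom_trans[OF P.const_ring_hom Q.const_ring_hom] by simp
qed

lemma iu_hom: "iu \<in> ring_hom PR QR"
  unfolding iu_def by (rule Q.const_ring_hom)

interpretation EV: UP_pre_univ_prop R QR hc "UP R"
  by (rule UP_pre_univ_propI[OF cring_axioms QR_cring hc_hom])

lemma iv_hom: "iv \<in> ring_hom PR QR"
  unfolding iv_def by (rule EV.eval_ring_hom[OF var_v_closed])

lemma hu_hom: "hu \<in> ring_hom PR SS"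
  unfolding hu_def by (rule ring_hom_trans[OF iu_hom qp_hom])
lemma hv_hom: "hv \<in> ring_hom PR SS"
  unfolding hv_def by (rule ring_hom_trans[OF iv_hom qp_hom])

lemma iv_X: "iv XX = var_v R"
  unfolding iv_def by (rule EV.eval_monom1[OF var_v_closed])

lemma iv_const: "r \<in> carrier R \<Longrightarrow> iv (up_ring.monom PR r 0) = const_uv R r"
  unfolding iv_def using EV.eval_const[OF var_v_closed] by (simp add: hc_def const_uv_def)

lemma iu_X: "iu XX = var_u R" unfolding iu_def var_u_def by simp
lemma iu_const: "r \<in> carrier R \<Longrightarrow> iu (up_ring.monom PR r 0) = const_uv R r"
  unfolding iu_def const_uv_def by simp

lemma hu_X: "hu XX = U" by (simp only: hu_def comp_apply iu_X)
lemma hv_X: "hv XX = V" by (simp only: hv_def comp_apply iv_X)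
lemma hu_const: "r \<in> carrier R \<Longrightarrow> hu (up_ring.monom PR r 0) = cS r"
  by (simp add: hu_def iu_const cS_def to_S_def qp_def)
lemma hv_const: "r \<in> carrier R \<Longrightarrow> hv (up_ring.monom PR r 0) = cS r"
  by (simp add: hv_def iv_const cS_def to_S_def qp_def)

interpretation S: cring SS by (rule S_cring)

lemma gg_in: "gg \<in> II"
  unfolding uv_ideal_def by (rule Q.P.cgenideal_self[OF gg_closed])

interpretation II: ideal II QR by (rule II_ideal)

lemma S_zero: "\<zero>\<^bsub>SS\<^esub> = II"
  unfolding S_ring_def FactRing_def by simp

lemma qp_zero_iff: "x \<in> carrier QR \<Longrightarrow> (qp x = \<zero>\<^bsub>SS\<^esub>) \<longleftrightarrow> x \<in> II"
proof
  assume x: "x \<in> carrier QR" and "qp x = \<zero>\<^bsub>SS\<^esub>"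
  then have "II +>\<^bsub>QR\<^esub> x = II" by (simp add: S_zero qp_def)
  moreover have "x \<in> II +>\<^bsub>QR\<^esub> x" by (rule II.a_rcos_self[OF x])
  ultimately show "x \<in> II" by simp
next
  assume "x \<in> II"
  then show "qp x = \<zero>\<^bsub>SS\<^esub>" by (simp add: S_zero qp_def II.a_rcos_const)
qed

lemma UV: "U \<otimes>\<^bsub>SS\<^esub> V = cS f"
proof -
  have "var_u R \<otimes>\<^bsub>QR\<^esub> var_v R = gg \<oplus>\<^bsub>QR\<^esub> const_uv R f"
    using var_u_closed var_v_closed const_closed[OF fc] by algebra
  then have "U \<otimes>\<^bsub>SS\<^esub> V = qp (gg \<oplus>\<^bsub>QR\<^esub> const_uv R f)"
    using ring_hom_mult[OF qp_hom var_u_closed var_v_closed] by simp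
  also have "\<dots> = qp gg \<oplus>\<^bsub>SS\<^esub> qp (const_uv R f)"
    using ring_hom_add[OF qp_hom gg_closed const_closed[OF fc]] .
  also have "qp gg = \<zero>\<^bsub>SS\<^esub>"
    using qp_zero_iff[OF gg_closed] gg_in by simp
  finally show ?thesis using const_closed[OF fc] ring_hom_closed[OF qp_hom]
    by (simp add: cS_def to_S_def qp_def)
qed

end

lemma (in abelian_monoid) finsum_if_eq:
  assumes "finite A" "c \<in> carrier G"
  shows "(\<Oplus>i\<in>A. if i = j then c else \<zero>) = (if j \<in> A then c else \<zero>)"
  using assms(1)
proof induct
  case empty
  then show ?case by simp
next
  case (insert x F)
  have fc: "(\<lambda>i. if i = j then c else \<zero>) \<in> F \<rightarrow> carrier G" using assms(2) by simp
  have "(\<Oplus>i\<in>insert x F. if i = j then c else \<zero>) = (if x = j then c else \<zero>) \<oplus> (\<Oplus>i\<in>F. if i = j then c else \<zero>)"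
    by (rule finsum_insert[OF insert.hyps(1,2) fc]) (simp add: assms(2))
  then show ?case using insert assms(2) by auto
qed

context UP_ring
begin

lemma coeff_monom_mult_low:
  assumes c: "c \<in> carrier R" and q: "q \<in> carrier P" and i: "i < k"
  shows "up_ring.coeff P (up_ring.monom P c k \<otimes>\<^bsub>P\<^esub> q) i = \<zero>"
proof -
  have "up_ring.coeff P (up_ring.monom P c k \<otimes>\<^bsub>P\<^esub> q) i
     = (\<Oplus>j\<in>{..i}. up_ring.coeff P (up_ring.monom P c k) j \<otimes> up_ring.coeff P q (i - j))"
    using c q by (simp only: coeff_mult monom_closed)
  also have "\<dots> = (\<Oplus>j\<in>{..i}. \<zero>)"
    by (rule R.finsum_cong') (use c q i in auto)
  finally show ?thesis by simp
qed

lemma carrier_P_up: "carrier P = up R" by (simp add: P_def UP_def)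
lemma coeff_P_app: "p \<in> up R \<Longrightarrow> up_ring.coeff P p n = p n" unfolding P_def UP_def by simp

lemma decomp_gen:
  assumes p: "p \<in> carrier P"
  obtains p' where "p' \<in> carrier P"
    "p = up_ring.monom P (up_ring.coeff P p 0) 0 \<oplus>\<^bsub>P\<^esub> up_ring.monom P \<one> 1 \<otimes>\<^bsub>P\<^esub> p'"
    "\<And>j. up_ring.coeff P p' j = up_ring.coeff P p (Suc j)"
proof -
  define p' where "p' = (\<lambda>j. up_ring.coeff P p (Suc j))"
  have bnd: "bound \<zero> (deg R p) p'"
    unfolding bound_def p'_def using deg_aboveD[OF _ p] by auto
  have pu: "p' \<in> up R"
  proof (rule mem_upI)
    show "\<And>n. p' n \<in> carrier R" using p by (simp add: p'_def)
    show "\<exists>n. bound \<zero> n p'" using bnd by blast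
  qed
  then have p'c: "p' \<in> carrier P" by (simp add: carrier_P_up)
  have cp': "\<And>j. up_ring.coeff P p' j = up_ring.coeff P p (Suc j)"
    using coeff_P_app[OF pu] by (simp add: p'_def)
  have X: "up_ring.monom P \<one> 1 \<in> carrier P" by simp
  have c0: "up_ring.coeff P p 0 \<in> carrier R" using p by simp
  have "p = up_ring.monom P (up_ring.coeff P p 0) 0 \<oplus>\<^bsub>P\<^esub> up_ring.monom P \<one> 1 \<otimes>\<^bsub>P\<^esub> p'"
  proof (rule up_eqI)
    fix n
    have e: "up_ring.coeff P (up_ring.monom P (up_ring.coeff P p 0) 0 \<oplus>\<^bsub>P\<^esub> up_ring.monom P \<one> 1 \<otimes>\<^bsub>P\<^esub> p') n
       = up_ring.coeff P (up_ring.monom P (up_ring.coeff P p 0) 0) n \<oplus> up_ring.coeff P (up_ring.monom P \<one> 1 \<otimes>\<^bsub>P\<^esub> p') n"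
      by (rule coeff_add) (use c0 X p'c in simp_all)
    show "up_ring.coeff P p n = up_ring.coeff P (up_ring.monom P (up_ring.coeff P p 0) 0 \<oplus>\<^bsub>P\<^esub> up_ring.monom P \<one> 1 \<otimes>\<^bsub>P\<^esub> p') n"
    proof (cases n)
      case 0
      have "up_ring.coeff P (up_ring.monom P \<one> 1 \<otimes>\<^bsub>P\<^esub> p') 0 = \<zero>"
        by (rule coeff_monom_mult_low[OF R.one_closed p'c]) simp
      then show ?thesis unfolding e using 0 c0 by (simp del: coeff_mult)
    next
      case (Suc m)
      have "up_ring.coeff P (up_ring.monom P \<one> 1 \<otimes>\<^bsub>P\<^esub> p') (m + 1) = \<one> \<otimes> up_ring.coeff P p' m"
        by (rule coeff_monom_mult[OF R.one_closed p'c])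
      then have "up_ring.coeff P (up_ring.monom P \<one> 1 \<otimes>\<^bsub>P\<^esub> p') n = up_ring.coeff P p n"
        using Suc cp' p'c p by (simp del: coeff_mult)
      then show ?thesis unfolding e using Suc c0 p by (simp del: coeff_mult)
    qed
  next
    show "p \<in> carrier P" by (rule p)
    show "up_ring.monom P (up_ring.coeff P p 0) 0 \<oplus>\<^bsub>P\<^esub> up_ring.monom P \<one> 1 \<otimes>\<^bsub>P\<^esub> p' \<in> carrier P"
      using c0 X p'c by simp
  qed
  then show ?thesis by (rule that[OF p'c _ cp'])
qed

end


context lctx
begin

interpretation S: cring SS by (rule S_cring)
interpretation EV: UP_pre_univ_prop R QR hc "UP R"
  by (rule UP_pre_univ_propI[OF cring_axioms QR_cring hc_hom])
interpretation II: ideal II QR by (rule II_ideal)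

lemma U_closed: "U \<in> carrier SS" using ring_hom_closed[OF qp_hom var_u_closed] .
lemma V_closed: "V \<in> carrier SS" using ring_hom_closed[OF qp_hom var_v_closed] .
lemma hu_closed: "A \<in> carrier PR \<Longrightarrow> hu A \<in> carrier SS" using ring_hom_closed[OF hu_hom] .
lemma hv_closed: "A \<in> carrier PR \<Longrightarrow> hv A \<in> carrier SS" using ring_hom_closed[OF hv_hom] .
lemma cS_closed: "r \<in> carrier R \<Longrightarrow> cS r \<in> carrier SS"
  using hu_closed[of "up_ring.monom PR r 0"] hu_const by simp

lemma hu_pow: "A \<in> carrier PR \<Longrightarrow> hu (A [^]\<^bsub>PR\<^esub> (n::nat)) = hu A [^]\<^bsub>SS\<^esub> n"
  by (rule ring_hom_ring.hom_nat_pow[OF ring_hom_ringI2[OF P.UP_ring S.ring_axioms hu_hom]])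
lemma hv_pow: "A \<in> carrier PR \<Longrightarrow> hv (A [^]\<^bsub>PR\<^esub> (n::nat)) = hv A [^]\<^bsub>SS\<^esub> n"
  by (rule ring_hom_ring.hom_nat_pow[OF ring_hom_ringI2[OF P.UP_ring S.ring_axioms hv_hom]])

lemma monom_split: "r \<in> carrier R \<Longrightarrow> up_ring.monom PR r k = up_ring.monom PR r 0 \<otimes>\<^bsub>PR\<^esub> XX [^]\<^bsub>PR\<^esub> k"
  using P.monom_mult[of r \<one> 0 k] P.monom_pow[of \<one> 1 k] by simp

lemma hu_monom:
  assumes r: "r \<in> carrier R"
  shows "hu (up_ring.monom PR r k) = cS r \<otimes>\<^bsub>SS\<^esub> U [^]\<^bsub>SS\<^esub> k"
proof -
  from monom_split[OF r, of k]
  have "hu (up_ring.monom PR r k) = hu (up_ring.monom PR r 0 \<otimes>\<^bsub>PR\<^esub> XX [^]\<^bsub>PR\<^esub> k)"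
    by (rule arg_cong)
  also have "\<dots> = hu (up_ring.monom PR r 0) \<otimes>\<^bsub>SS\<^esub> hu (XX [^]\<^bsub>PR\<^esub> k)"
    by (rule ring_hom_mult[OF hu_hom]) (use r in simp_all)
  also have "\<dots> = cS r \<otimes>\<^bsub>SS\<^esub> U [^]\<^bsub>SS\<^esub> k"
    by (simp only: hu_pow[OF X_closed] hu_X hu_const[OF r])
  finally show ?thesis .
qed
lemma hv_monom:
  assumes r: "r \<in> carrier R"
  shows "hv (up_ring.monom PR r k) = cS r \<otimes>\<^bsub>SS\<^esub> V [^]\<^bsub>SS\<^esub> k"
proof -
  from monom_split[OF r, of k]
  have "hv (up_ring.monom PR r k) = hv (up_ring.monom PR r 0 \<otimes>\<^bsub>PR\<^esub> XX [^]\<^bsub>PR\<^esub> k)"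
    by (rule arg_cong)
  also have "\<dots> = hv (up_ring.monom PR r 0) \<otimes>\<^bsub>SS\<^esub> hv (XX [^]\<^bsub>PR\<^esub> k)"
    by (rule ring_hom_mult[OF hv_hom]) (use r in simp_all)
  also have "\<dots> = cS r \<otimes>\<^bsub>SS\<^esub> V [^]\<^bsub>SS\<^esub> k"
    by (simp only: hv_pow[OF X_closed] hv_X hv_const[OF r])
  finally show ?thesis .
qed

lemma coeff_iv:
  assumes B: "B \<in> carrier PR"
  shows "up_ring.coeff QR (iv B) n = up_ring.monom PR (up_ring.coeff PR B n) 0"
proof -
  have tm: "hc (up_ring.coeff PR B i) \<otimes>\<^bsub>QR\<^esub> var_v R [^]\<^bsub>QR\<^esub> i
      = up_ring.monom QR (up_ring.monom PR (up_ring.coeff PR B i) 0) i" for i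
  proof -
    have "var_v R [^]\<^bsub>QR\<^esub> i = up_ring.monom QR \<one>\<^bsub>PR\<^esub> i"
      unfolding var_v_def using Q.monom_pow[of "\<one>\<^bsub>PR\<^esub>" 1 i] by simp
    then show ?thesis
      using Q.monom_mult[of "up_ring.monom PR (up_ring.coeff PR B i) 0" "\<one>\<^bsub>PR\<^esub>" 0 i] B
      by (simp add: hc_def)
  qed
  have "iv B = (\<Oplus>\<^bsub>QR\<^esub> i\<in>{..deg R B}. up_ring.monom QR (up_ring.monom PR (up_ring.coeff PR B i) 0) i)"
    unfolding iv_def using P.eval_on_carrier[OF B, of QR hc "var_v R"] tm by simp
  then have "up_ring.coeff QR (iv B) n
     = (\<Oplus>\<^bsub>PR\<^esub> i\<in>{..deg R B}. up_ring.coeff QR (up_ring.monom QR (up_ring.monom PR (up_ring.coeff PR B i) 0) i) n)"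
    using Q.coeff_finsum[of "{..deg R B}" "\<lambda>i. up_ring.monom QR (up_ring.monom PR (up_ring.coeff PR B i) 0) i" n] B
    by (simp add: Pi_def del: Q.coeff_monom)
  also have "\<dots> = (\<Oplus>\<^bsub>PR\<^esub> i\<in>{..deg R B}. if i = n then up_ring.monom PR (up_ring.coeff PR B n) 0 else \<zero>\<^bsub>PR\<^esub>)"
    by (rule P.P.finsum_cong') (use B in auto)
  also have "\<dots> = (if n \<in> {..deg R B} then up_ring.monom PR (up_ring.coeff PR B n) 0 else \<zero>\<^bsub>PR\<^esub>)"
    by (rule P.P.finsum_if_eq) (use B in simp_all)
  also have "\<dots> = up_ring.monom PR (up_ring.coeff PR B n) 0"
    using P.deg_aboveD[of B n] B by auto
  finally show ?thesis .
qed


definition "NF = {hu A \<oplus>\<^bsub>SS\<^esub> hv B | A B. A \<in> carrier PR \<and> B \<in> carrier PR}"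

lemma NF_I: "A \<in> carrier PR \<Longrightarrow> B \<in> carrier PR \<Longrightarrow> x = hu A \<oplus>\<^bsub>SS\<^esub> hv B \<Longrightarrow> x \<in> NF"
  unfolding NF_def by blast

lemma NF_E:
  assumes "x \<in> NF"
  obtains A B where "A \<in> carrier PR" "B \<in> carrier PR" "x = hu A \<oplus>\<^bsub>SS\<^esub> hv B"
  using assms unfolding NF_def by blast

lemma hv_zero: "hv \<zero>\<^bsub>PR\<^esub> = \<zero>\<^bsub>SS\<^esub>"
  by (rule ring_hom_zero[OF hv_hom P.UP_ring S.ring_axioms])

lemma hu_eq: "hu A = qp (up_ring.monom QR A 0)" by (simp add: hu_def iu_def)

lemma hu_in_NF: "A \<in> carrier PR \<Longrightarrow> hu A \<in> NF"
  by (rule NF_I[of A "\<zero>\<^bsub>PR\<^esub>"]) (simp_all add: hv_zero hu_closed)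

lemma NF_add:
  assumes x: "x \<in> NF" and y: "y \<in> NF" shows "x \<oplus>\<^bsub>SS\<^esub> y \<in> NF"
proof -
  obtain A B where A: "A \<in> carrier PR" and B: "B \<in> carrier PR" and xe: "x = hu A \<oplus>\<^bsub>SS\<^esub> hv B"
    using x by (rule NF_E)
  obtain A' B' where A': "A' \<in> carrier PR" and B': "B' \<in> carrier PR" and ye: "y = hu A' \<oplus>\<^bsub>SS\<^esub> hv B'"
    using y by (rule NF_E)
  have "hu (A \<oplus>\<^bsub>PR\<^esub> A') \<oplus>\<^bsub>SS\<^esub> hv (B \<oplus>\<^bsub>PR\<^esub> B') = (hu A \<oplus>\<^bsub>SS\<^esub> hu A') \<oplus>\<^bsub>SS\<^esub> (hv B \<oplus>\<^bsub>SS\<^esub> hv B')"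
    by (simp add: ring_hom_add[OF hu_hom A A'] ring_hom_add[OF hv_hom B B'])
  also have "\<dots> = x \<oplus>\<^bsub>SS\<^esub> y"
    using hu_closed[OF A] hu_closed[OF A'] hv_closed[OF B] hv_closed[OF B'] unfolding xe ye by algebra
  finally show ?thesis
    by (intro NF_I[of "A \<oplus>\<^bsub>PR\<^esub> A'" "B \<oplus>\<^bsub>PR\<^esub> B'"]) (use A A' B B' in simp_all)
qed

lemma hu_decomp:
  assumes A: "A \<in> carrier PR"
    and A': "A' \<in> carrier PR"
    and eq: "A = up_ring.monom PR (up_ring.coeff PR A 0) 0 \<oplus>\<^bsub>PR\<^esub> XX \<otimes>\<^bsub>PR\<^esub> A'"
  shows "hu A = cS (up_ring.coeff PR A 0) \<oplus>\<^bsub>SS\<^esub> U \<otimes>\<^bsub>SS\<^esub> hu A'"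
proof -
  have c0: "up_ring.coeff PR A 0 \<in> carrier R" using A by simp
  from eq have "hu A = hu (up_ring.monom PR (up_ring.coeff PR A 0) 0 \<oplus>\<^bsub>PR\<^esub> XX \<otimes>\<^bsub>PR\<^esub> A')" by (rule arg_cong)
  also have "\<dots> = hu (up_ring.monom PR (up_ring.coeff PR A 0) 0) \<oplus>\<^bsub>SS\<^esub> hu (XX \<otimes>\<^bsub>PR\<^esub> A')"
    by (rule ring_hom_add[OF hu_hom]) (use c0 A' in simp_all)
  also have "hu (XX \<otimes>\<^bsub>PR\<^esub> A') = hu XX \<otimes>\<^bsub>SS\<^esub> hu A'"
    by (rule ring_hom_mult[OF hu_hom X_closed A'])
  finally show ?thesis by (simp only: hu_X hu_const[OF c0])
qed

lemma hv_decomp: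
  assumes A: "A \<in> carrier PR"
    and A': "A' \<in> carrier PR"
    and eq: "A = up_ring.monom PR (up_ring.coeff PR A 0) 0 \<oplus>\<^bsub>PR\<^esub> XX \<otimes>\<^bsub>PR\<^esub> A'"
  shows "hv A = cS (up_ring.coeff PR A 0) \<oplus>\<^bsub>SS\<^esub> V \<otimes>\<^bsub>SS\<^esub> hv A'"
proof -
  have c0: "up_ring.coeff PR A 0 \<in> carrier R" using A by simp
  from eq have "hv A = hv (up_ring.monom PR (up_ring.coeff PR A 0) 0 \<oplus>\<^bsub>PR\<^esub> XX \<otimes>\<^bsub>PR\<^esub> A')" by (rule arg_cong)
  also have "\<dots> = hv (up_ring.monom PR (up_ring.coeff PR A 0) 0) \<oplus>\<^bsub>SS\<^esub> hv (XX \<otimes>\<^bsub>PR\<^esub> A')"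
    by (rule ring_hom_add[OF hv_hom]) (use c0 A' in simp_all)
  also have "hv (XX \<otimes>\<^bsub>PR\<^esub> A') = hv XX \<otimes>\<^bsub>SS\<^esub> hv A'"
    by (rule ring_hom_mult[OF hv_hom X_closed A'])
  finally show ?thesis by (simp only: hv_X hv_const[OF c0])
qed

lemma NF_V:
  assumes x: "x \<in> NF" shows "V \<otimes>\<^bsub>SS\<^esub> x \<in> NF"
proof -
  obtain A B where A: "A \<in> carrier PR" and B: "B \<in> carrier PR" and xe: "x = hu A \<oplus>\<^bsub>SS\<^esub> hv B"
    using x by (rule NF_E)
  obtain A' where A': "A' \<in> carrier PR"
    and eq: "A = up_ring.monom PR (up_ring.coeff PR A 0) 0 \<oplus>\<^bsub>PR\<^esub> XX \<otimes>\<^bsub>PR\<^esub> A'"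
    by (rule P.decomp_gen[OF A])
  define a0 where "a0 = up_ring.coeff PR A 0"
  have a0: "a0 \<in> carrier R" using A by (simp add: a0_def)
  have hA: "hu A = cS a0 \<oplus>\<^bsub>SS\<^esub> U \<otimes>\<^bsub>SS\<^esub> hu A'"
    unfolding a0_def by (rule hu_decomp[OF A A' eq])
  have h1: "hu (up_ring.monom PR f 0 \<otimes>\<^bsub>PR\<^esub> A') = cS f \<otimes>\<^bsub>SS\<^esub> hu A'"
    using ring_hom_mult[OF hu_hom _ A', of "up_ring.monom PR f 0"] hu_const[OF fc] fc by simp
  have h2: "hv (up_ring.monom PR a0 1 \<oplus>\<^bsub>PR\<^esub> XX \<otimes>\<^bsub>PR\<^esub> B) = cS a0 \<otimes>\<^bsub>SS\<^esub> V \<oplus>\<^bsub>SS\<^esub> V \<otimes>\<^bsub>SS\<^esub> hv B"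
  proof -
    have "hv (up_ring.monom PR a0 1 \<oplus>\<^bsub>PR\<^esub> XX \<otimes>\<^bsub>PR\<^esub> B) = hv (up_ring.monom PR a0 1) \<oplus>\<^bsub>SS\<^esub> hv (XX \<otimes>\<^bsub>PR\<^esub> B)"
      by (rule ring_hom_add[OF hv_hom]) (use a0 B in simp_all)
    also have "hv (XX \<otimes>\<^bsub>PR\<^esub> B) = V \<otimes>\<^bsub>SS\<^esub> hv B"
      using ring_hom_mult[OF hv_hom X_closed B] hv_X by simp
    also have "hv (up_ring.monom PR a0 1) = cS a0 \<otimes>\<^bsub>SS\<^esub> V"
      using hv_monom[OF a0, of 1] S.nat_pow_eone[OF V_closed] by simp
    finally show ?thesis .
  qed
  have cl: "cS a0 \<in> carrier SS" "hu A' \<in> carrier SS" "hv B \<in> carrier SS"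
    using cS_closed[OF a0] hu_closed[OF A'] hv_closed[OF B] by auto
  have "V \<otimes>\<^bsub>SS\<^esub> x = (U \<otimes>\<^bsub>SS\<^esub> V) \<otimes>\<^bsub>SS\<^esub> hu A' \<oplus>\<^bsub>SS\<^esub> (cS a0 \<otimes>\<^bsub>SS\<^esub> V \<oplus>\<^bsub>SS\<^esub> V \<otimes>\<^bsub>SS\<^esub> hv B)"
    unfolding xe hA using cl U_closed V_closed by algebra
  also have "\<dots> = hu (up_ring.monom PR f 0 \<otimes>\<^bsub>PR\<^esub> A') \<oplus>\<^bsub>SS\<^esub> hv (up_ring.monom PR a0 1 \<oplus>\<^bsub>PR\<^esub> XX \<otimes>\<^bsub>PR\<^esub> B)"
    by (simp only: h1 h2 UV)
  finally show ?thesis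
    by (rule NF_I[rotated 2]) (use A' a0 B fc in simp_all)
qed

lemma F1:
  assumes "p \<in> carrier QR" shows "qp p \<in> NF"
  using assms
proof (induction "deg PR p" arbitrary: p rule: less_induct)
  case less
  have pc: "p \<in> carrier QR" by (rule less.prems)
  obtain p' where p'c: "p' \<in> carrier QR"
    and peq: "p = up_ring.monom QR (up_ring.coeff QR p 0) 0 \<oplus>\<^bsub>QR\<^esub> up_ring.monom QR \<one>\<^bsub>PR\<^esub> 1 \<otimes>\<^bsub>QR\<^esub> p'"
    and cp': "\<And>j. up_ring.coeff QR p' j = up_ring.coeff QR p (Suc j)"
    using Q.decomp_gen[OF pc] by blast
  have c0: "up_ring.coeff QR p 0 \<in> carrier PR" using pc by simp
  show ?case
  proof (cases "deg PR p = 0")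
    case True
    then have "p = up_ring.monom QR (up_ring.coeff QR p 0) 0" by (rule Q.deg_zero_impl_monom[OF pc])
    then have "qp p = hu (up_ring.coeff QR p 0)" by (simp add: hu_eq)
    then show ?thesis using hu_in_NF[OF c0] by simp
  next
    case False
    have "deg PR p' \<le> deg PR p - 1"
    proof (rule Q.deg_aboveI)
      fix m assume "deg PR p - 1 < m"
      then have "deg PR p < Suc m" by arith
      then show "up_ring.coeff QR p' m = \<zero>\<^bsub>PR\<^esub>" using cp' Q.deg_aboveD[OF _ pc] by simp
    qed (rule p'c)
    then have "deg PR p' < deg PR p" using False by arith
    then have IH: "qp p' \<in> NF" using less.hyps p'c by blast
    have "qp p = qp (up_ring.monom QR (up_ring.coeff QR p 0) 0) \<oplus>\<^bsub>SS\<^esub> qp (var_v R \<otimes>\<^bsub>QR\<^esub> p')"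
      using peq ring_hom_add[OF qp_hom, of "up_ring.monom QR (up_ring.coeff QR p 0) 0" "var_v R \<otimes>\<^bsub>QR\<^esub> p'"]
        c0 p'c var_v_closed by (simp add: var_v_def)
    also have "\<dots> = hu (up_ring.coeff QR p 0) \<oplus>\<^bsub>SS\<^esub> V \<otimes>\<^bsub>SS\<^esub> qp p'"
      using ring_hom_mult[OF qp_hom var_v_closed p'c] by (simp add: hu_eq)
    finally show ?thesis using NF_add[OF hu_in_NF[OF c0] NF_V[OF IH]] by simp
  qed
qed

lemma NF_norm:
  assumes x: "x \<in> NF"
  obtains A B where "A \<in> carrier PR" "B \<in> carrier PR" "up_ring.coeff PR B 0 = \<zero>"
    "x = hu A \<oplus>\<^bsub>SS\<^esub> hv B"
proof -
  obtain A B where A: "A \<in> carrier PR" and B: "B \<in> carrier PR" and xe: "x = hu A \<oplus>\<^bsub>SS\<^esub> hv B"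
    using x by (rule NF_E)
  obtain B' where B': "B' \<in> carrier PR"
    and eq: "B = up_ring.monom PR (up_ring.coeff PR B 0) 0 \<oplus>\<^bsub>PR\<^esub> XX \<otimes>\<^bsub>PR\<^esub> B'"
    by (rule P.decomp_gen[OF B])
  define b0 where "b0 = up_ring.coeff PR B 0"
  have b0: "b0 \<in> carrier R" using B by (simp add: b0_def)
  have hB: "hv B = cS b0 \<oplus>\<^bsub>SS\<^esub> V \<otimes>\<^bsub>SS\<^esub> hv B'"
    unfolding b0_def by (rule hv_decomp[OF B B' eq])
  have h1: "hu (A \<oplus>\<^bsub>PR\<^esub> up_ring.monom PR b0 0) = hu A \<oplus>\<^bsub>SS\<^esub> cS b0"
    using ring_hom_add[OF hu_hom A, of "up_ring.monom PR b0 0"] hu_const[OF b0] b0 by simp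
  have h2: "hv (XX \<otimes>\<^bsub>PR\<^esub> B') = V \<otimes>\<^bsub>SS\<^esub> hv B'"
    using ring_hom_mult[OF hv_hom X_closed B'] hv_X by simp
  have "x = hu (A \<oplus>\<^bsub>PR\<^esub> up_ring.monom PR b0 0) \<oplus>\<^bsub>SS\<^esub> hv (XX \<otimes>\<^bsub>PR\<^esub> B')"
    unfolding h1 h2 xe hB using hu_closed[OF A] cS_closed[OF b0] hv_closed[OF B'] V_closed by algebra
  moreover have "up_ring.coeff PR (XX \<otimes>\<^bsub>PR\<^esub> B') 0 = \<zero>"
    by (rule P.coeff_monom_mult_low[OF one_closed B']) simp
  ultimately show ?thesis using that[of "A \<oplus>\<^bsub>PR\<^esub> up_ring.monom PR b0 0" "XX \<otimes>\<^bsub>PR\<^esub> B'"] A b0 B' by simp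
qed

end

lemma (in UP_domain) mono_factor:
  assumes p: "p \<in> carrier P" and q: "q \<in> carrier P" and a: "a \<in> carrier R" "a \<noteq> \<zero>"
    and pq: "p \<otimes>\<^bsub>P\<^esub> q = up_ring.monom P a M"
  shows "p = up_ring.monom P (up_ring.coeff P p (deg R p)) (deg R p)"
proof -
  have pnz: "p \<noteq> \<zero>\<^bsub>P\<^esub>"
  proof
    assume "p = \<zero>\<^bsub>P\<^esub>"
    then have "up_ring.monom P a M = \<zero>\<^bsub>P\<^esub>" using pq q by simp
    then have "up_ring.coeff P (up_ring.monom P a M) M = \<zero>" by simp
    then show False using a by simp
  qed
  have qnz: "q \<noteq> \<zero>\<^bsub>P\<^esub>"
  proof
    assume "q = \<zero>\<^bsub>P\<^esub>"
    then have "up_ring.monom P a M = \<zero>\<^bsub>P\<^esub>" using pq p by simp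
    then have "up_ring.coeff P (up_ring.monom P a M) M = \<zero>" by simp
    then show False using a by simp
  qed
  have exp: "\<exists>i. up_ring.coeff P p i \<noteq> \<zero>" using lcoeff_nonzero[OF pnz p] by blast
  have exq: "\<exists>i. up_ring.coeff P q i \<noteq> \<zero>" using lcoeff_nonzero[OF qnz q] by blast
  define i0 where "i0 = (LEAST i. up_ring.coeff P p i \<noteq> \<zero>)"
  define j0 where "j0 = (LEAST i. up_ring.coeff P q i \<noteq> \<zero>)"
  have i0: "up_ring.coeff P p i0 \<noteq> \<zero>" unfolding i0_def by (rule LeastI_ex[OF exp])
  have j0: "up_ring.coeff P q j0 \<noteq> \<zero>" unfolding j0_def by (rule LeastI_ex[OF exq])
  have bi: "up_ring.coeff P p i = \<zero>" if "i < i0" for i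
    using not_less_Least[of i "\<lambda>i. up_ring.coeff P p i \<noteq> \<zero>"] that unfolding i0_def by blast
  have bj: "up_ring.coeff P q i = \<zero>" if "i < j0" for i
    using not_less_Least[of i "\<lambda>i. up_ring.coeff P q i \<noteq> \<zero>"] that unfolding j0_def by blast
  have "up_ring.coeff P (p \<otimes>\<^bsub>P\<^esub> q) (i0 + j0)
      = (\<Oplus>i\<in>{..i0 + j0}. up_ring.coeff P p i \<otimes> up_ring.coeff P q (i0 + j0 - i))"
    using p q by (simp only: coeff_mult)
  also have "\<dots> = (\<Oplus>i\<in>{..i0 + j0}. if i = i0 then up_ring.coeff P p i0 \<otimes> up_ring.coeff P q j0 else \<zero>)"
  proof (rule R.finsum_cong')
    fix i assume iA: "i \<in> {..i0 + j0}"
    then have iA': "i \<le> i0 + j0" by simp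
    show "up_ring.coeff P p i \<otimes> up_ring.coeff P q (i0 + j0 - i) = (if i = i0 then up_ring.coeff P p i0 \<otimes> up_ring.coeff P q j0 else \<zero>)"
    proof (cases "i < i0")
      case True then show ?thesis using bi[OF True] p q by simp
    next
      case False
      show ?thesis
      proof (cases "i = i0")
        case True then show ?thesis by simp
      next
        case False2: False
        then have "i0 + j0 - i < j0" using False iA' by arith
        then show ?thesis using bj[of "i0 + j0 - i"] False2 p q by simp
      qed
    qed
  qed (use p q in simp_all)
  also have "\<dots> = up_ring.coeff P p i0 \<otimes> up_ring.coeff P q j0"
    by (subst R.finsum_if_eq) (use p q in simp_all)
  finally have c: "up_ring.coeff P (p \<otimes>\<^bsub>P\<^esub> q) (i0 + j0) = up_ring.coeff P p i0 \<otimes> up_ring.coeff P q j0" .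
  have "up_ring.coeff P p i0 \<otimes> up_ring.coeff P q j0 \<noteq> \<zero>"
    using i0 j0 p q R.integral_iff by simp
  then have "up_ring.coeff P (up_ring.monom P a M) (i0 + j0) \<noteq> \<zero>" using c pq by simp
  then have M: "M = i0 + j0" using a by (simp split: if_splits)
  have "deg R p + deg R q = M" using deg_mult[OF pnz qnz p q] pq a by simp
  moreover have "i0 \<le> deg R p" unfolding i0_def by (rule Least_le) (rule lcoeff_nonzero[OF pnz p])
  moreover have "j0 \<le> deg R q" unfolding j0_def by (rule Least_le) (rule lcoeff_nonzero[OF qnz q])
  ultimately have i0d: "i0 = deg R p" using M by arith
  show ?thesis
  proof (rule up_eqI)
    fix n show "up_ring.coeff P p n = up_ring.coeff P (up_ring.monom P (up_ring.coeff P p (deg R p)) (deg R p)) n"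
    proof (cases "n < deg R p")
      case True then show ?thesis using bi[of n] i0d p by simp
    next
      case False
      then show ?thesis using deg_aboveD[of p n] p by (cases "n = deg R p") simp_all
    qed
  qed (use p in simp_all)
qed

context lctx
begin

interpretation S: cring SS by (rule S_cring)
interpretation II: ideal II QR by (rule II_ideal)

lemma iu_closed: "A \<in> carrier PR \<Longrightarrow> iu A \<in> carrier QR" using ring_hom_closed[OF iu_hom] .
lemma iv_closed: "A \<in> carrier PR \<Longrightarrow> iv A \<in> carrier QR" using ring_hom_closed[OF iv_hom] .
lemma coeff_iu: "A \<in> carrier PR \<Longrightarrow> up_ring.coeff QR (iu A) n = (if n = 0 then A else \<zero>\<^bsub>PR\<^esub>)"
  unfolding iu_def by simp
lemma hu_qp: "hu A = qp (iu A)" by (simp add: hu_def)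
lemma hv_qp: "hv B = qp (iv B)" by (simp add: hv_def)

lemma qp_eq_diff:
  assumes x: "x \<in> carrier QR" and y: "y \<in> carrier QR" and e: "qp x = qp y"
  shows "x \<ominus>\<^bsub>QR\<^esub> y \<in> II"
proof -
  have "x \<in> II +>\<^bsub>QR\<^esub> x" by (rule II.a_rcos_self[OF x])
  then have "x \<in> II +>\<^bsub>QR\<^esub> y" using e by (simp add: qp_def)
  then show ?thesis using II.a_rcos_module_minus[OF Q.P.ring_axioms y x] by simp
qed

lemma XX_nz: "XX \<noteq> \<zero>\<^bsub>PR\<^esub>"
proof
  assume "XX = \<zero>\<^bsub>PR\<^esub>"
  then have "up_ring.coeff PR XX 1 = up_ring.coeff PR \<zero>\<^bsub>PR\<^esub> 1" by simp
  then show False by simp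
qed

lemma F2:
  assumes A: "A \<in> carrier PR" and B: "B \<in> carrier PR" and A': "A' \<in> carrier PR" and B': "B' \<in> carrier PR"
    and B0: "up_ring.coeff PR B 0 = \<zero>" and B'0: "up_ring.coeff PR B' 0 = \<zero>"
    and eq: "hu A \<oplus>\<^bsub>SS\<^esub> hv B = hu A' \<oplus>\<^bsub>SS\<^esub> hv B'"
  shows "A = A' \<and> B = B'"
proof -
  define w where "w = (iu A \<oplus>\<^bsub>QR\<^esub> iv B) \<ominus>\<^bsub>QR\<^esub> (iu A' \<oplus>\<^bsub>QR\<^esub> iv B')"
  have c1: "iu A \<oplus>\<^bsub>QR\<^esub> iv B \<in> carrier QR" using iu_closed[OF A] iv_closed[OF B] by simp
  have c2: "iu A' \<oplus>\<^bsub>QR\<^esub> iv B' \<in> carrier QR" using iu_closed[OF A'] iv_closed[OF B'] by simp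
  have wc: "w \<in> carrier QR" using c1 c2 by (simp add: w_def)
  have "qp (iu A \<oplus>\<^bsub>QR\<^esub> iv B) = qp (iu A' \<oplus>\<^bsub>QR\<^esub> iv B')"
    using eq ring_hom_add[OF qp_hom iu_closed[OF A] iv_closed[OF B]]
      ring_hom_add[OF qp_hom iu_closed[OF A'] iv_closed[OF B']]
    by (simp add: hu_qp hv_qp)
  then have "w \<in> II" unfolding w_def by (rule qp_eq_diff[OF c1 c2])
  then obtain z where z: "z \<in> carrier QR" and wz: "w = z \<otimes>\<^bsub>QR\<^esub> gg"
    unfolding uv_ideal_def cgenideal_def by blast
  have cw: "up_ring.coeff QR w n = (up_ring.coeff QR (iu A) n \<oplus>\<^bsub>PR\<^esub> up_ring.monom PR (up_ring.coeff PR B n) 0)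
      \<ominus>\<^bsub>PR\<^esub> (up_ring.coeff QR (iu A') n \<oplus>\<^bsub>PR\<^esub> up_ring.monom PR (up_ring.coeff PR B' n) 0)" for n
    unfolding w_def using iu_closed[OF A] iv_closed[OF B] iu_closed[OF A'] iv_closed[OF B'] c1 c2
    by (simp add: coeff_iv[OF B] coeff_iv[OF B'])
  have cwn: "up_ring.coeff QR w n = up_ring.monom PR (up_ring.coeff PR B n) 0 \<ominus>\<^bsub>PR\<^esub> up_ring.monom PR (up_ring.coeff PR B' n) 0"
    if "n \<noteq> 0" for n
    using cw[of n] that coeff_iu[OF A, of n] coeff_iu[OF A', of n] B B' by simp
  have dconst: "deg R (up_ring.coeff QR w n) = 0" if "n \<noteq> 0" for n
  proof -
    have "deg R (up_ring.coeff QR w n) \<le> 0"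
    proof (rule P.deg_aboveI)
      fix m :: nat assume "0 < m"
      then show "up_ring.coeff PR (up_ring.coeff QR w n) m = \<zero>"
        using cwn[OF that] B B' by simp
    qed (use wc in simp)
    then show ?thesis by simp
  qed
  have fcP: "up_ring.monom PR f 0 \<in> carrier PR" using fc by simp
  have z0: "z = \<zero>\<^bsub>QR\<^esub>"
  proof (rule ccontr)
    assume nz: "z \<noteq> \<zero>\<^bsub>QR\<^esub>"
    define d where "d = deg PR z"
    define lz where "lz = up_ring.coeff QR z d"
    have lzc: "lz \<in> carrier PR" using z by (simp add: lz_def)
    have lznz: "lz \<noteq> \<zero>\<^bsub>PR\<^esub>" using Q.lcoeff_nonzero[OF nz z] by (simp add: lz_def d_def)
    have m1: "up_ring.monom QR XX 1 \<in> carrier QR" by simp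
    have m2: "up_ring.monom QR (up_ring.monom PR f 0) 0 \<in> carrier QR" using fcP by simp
    have gg_eq: "gg = up_ring.monom QR XX 1 \<ominus>\<^bsub>QR\<^esub> up_ring.monom QR (up_ring.monom PR f 0) 0"
      unfolding var_u_def var_v_def const_uv_def using Q.monom_mult[of XX "\<one>\<^bsub>PR\<^esub>" 0 1] by simp
    have "z \<otimes>\<^bsub>QR\<^esub> gg = up_ring.monom QR XX 1 \<otimes>\<^bsub>QR\<^esub> z \<ominus>\<^bsub>QR\<^esub> up_ring.monom QR (up_ring.monom PR f 0) 0 \<otimes>\<^bsub>QR\<^esub> z"
      unfolding gg_eq using z m1 m2 by algebra
    then have "up_ring.coeff QR w (d + 1) = up_ring.coeff QR (up_ring.monom QR XX 1 \<otimes>\<^bsub>QR\<^esub> z) (d + 1)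
        \<ominus>\<^bsub>PR\<^esub> up_ring.coeff QR (up_ring.monom QR (up_ring.monom PR f 0) 0 \<otimes>\<^bsub>QR\<^esub> z) (d + 1)"
      using wz Q.coeff_minus[of "up_ring.monom QR XX 1 \<otimes>\<^bsub>QR\<^esub> z" "up_ring.monom QR (up_ring.monom PR f 0) 0 \<otimes>\<^bsub>QR\<^esub> z" "d + 1"]
        z m1 m2 by simp
    also have "up_ring.coeff QR (up_ring.monom QR XX 1 \<otimes>\<^bsub>QR\<^esub> z) (d + 1) = XX \<otimes>\<^bsub>PR\<^esub> lz"
      using Q.coeff_monom_mult[OF X_closed z, of 1 d] by (simp add: lz_def)
    also have "up_ring.coeff QR (up_ring.monom QR (up_ring.monom PR f 0) 0 \<otimes>\<^bsub>QR\<^esub> z) (d + 1) = \<zero>\<^bsub>PR\<^esub>"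
      using Q.coeff_monom_mult[OF fcP z, of 0 "d+1"] Q.deg_aboveD[of z "d+1"] z fcP by (simp add: d_def)
    finally have "up_ring.coeff QR w (d+1) = XX \<otimes>\<^bsub>PR\<^esub> lz \<ominus>\<^bsub>PR\<^esub> \<zero>\<^bsub>PR\<^esub>" .
    then have cwd: "up_ring.coeff QR w (d+1) = XX \<otimes>\<^bsub>PR\<^esub> lz" using lzc X_closed by (simp add: a_minus_def)
    have "deg R (XX \<otimes>\<^bsub>PR\<^esub> lz) = deg R XX + deg R lz"
      by (rule P.deg_mult[OF XX_nz lznz X_closed lzc])
    then have "deg R (XX \<otimes>\<^bsub>PR\<^esub> lz) = 1 + deg R lz" by simp
    then show False using dconst[of "d+1"] cwd by simp
  qed
  have w0: "w = \<zero>\<^bsub>QR\<^esub>" using wz z0 gg_closed by simp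
  have cw0: "up_ring.coeff QR w n = \<zero>\<^bsub>PR\<^esub>" for n using w0 by simp
  have "up_ring.coeff QR w 0 = A \<ominus>\<^bsub>PR\<^esub> A'"
    using cw[of 0] coeff_iu[OF A, of 0] coeff_iu[OF A', of 0] B0 B'0 A A' by simp
  then have "A \<ominus>\<^bsub>PR\<^esub> A' = \<zero>\<^bsub>PR\<^esub>" using cw0[of 0] by simp
  then have AA: "A = A'" using P.P.r_right_minus_eq[OF A A'] by simp
  have BB: "B = B'"
  proof (rule P.up_eqI)
    fix n show "up_ring.coeff PR B n = up_ring.coeff PR B' n"
    proof (cases "n = 0")
      case True then show ?thesis using B0 B'0 by simp
    next
      case False
      then have "up_ring.monom PR (up_ring.coeff PR B n) 0 \<ominus>\<^bsub>PR\<^esub> up_ring.monom PR (up_ring.coeff PR B' n) 0 = \<zero>\<^bsub>PR\<^esub>"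
        using cwn[OF False] cw0[of n] by simp
      then have "up_ring.monom PR (up_ring.coeff PR B n) 0 = up_ring.monom PR (up_ring.coeff PR B' n) 0"
        using B B' by simp
      then have "up_ring.coeff PR (up_ring.monom PR (up_ring.coeff PR B n) 0) 0 = up_ring.coeff PR (up_ring.monom PR (up_ring.coeff PR B' n) 0) 0"
        by simp
      then show ?thesis using B B' by simp
    qed
  qed (use B B' in simp_all)
  show ?thesis using AA BB by simp
qed

lemma hu_inj:
  assumes A: "A \<in> carrier PR" and A': "A' \<in> carrier PR" and e: "hu A = hu A'"
  shows "A = A'"
proof -
  have "hu A \<oplus>\<^bsub>SS\<^esub> hv \<zero>\<^bsub>PR\<^esub> = hu A' \<oplus>\<^bsub>SS\<^esub> hv \<zero>\<^bsub>PR\<^esub>" using e by simp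
  then show ?thesis using F2[OF A _ A', of "\<zero>\<^bsub>PR\<^esub>" "\<zero>\<^bsub>PR\<^esub>"] by simp
qed

end

context lctx
begin

interpretation S: cring SS by (rule S_cring)

lemma fpow_nz: "f [^] (k::nat) \<noteq> \<zero>"
proof (induction k)
  case 0 then show ?case by simp
next
  case (Suc k) then show ?case using fc fnz integral_iff[OF nat_pow_closed[OF fc] fc] by simp
qed

lemma Un_hv:
  assumes "B \<in> carrier PR" "deg R B \<le> n"
  shows "\<exists>B''. B'' \<in> carrier PR \<and> U [^]\<^bsub>SS\<^esub> n \<otimes>\<^bsub>SS\<^esub> hv B = hu B'' \<and>
     (\<forall>i. up_ring.coeff PR B'' i = (if i \<le> n then up_ring.coeff PR B (n - i) \<otimes> f [^] (n - i) else \<zero>))"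
  using assms
proof (induction n arbitrary: B)
  case 0
  then have Bc: "B \<in> carrier PR" and d0: "deg R B = 0" by auto
  have Beq: "B = up_ring.monom PR (up_ring.coeff PR B 0) 0" by (rule P.deg_zero_impl_monom[OF Bc d0])
  have b0: "up_ring.coeff PR B 0 \<in> carrier R" using Bc by simp
  have "hv B = hu B"
  proof -
    have "hv B = hv (up_ring.monom PR (up_ring.coeff PR B 0) 0)" using Beq by (rule arg_cong)
    also have "\<dots> = cS (up_ring.coeff PR B 0)" by (rule hv_const[OF b0])
    also have "\<dots> = hu (up_ring.monom PR (up_ring.coeff PR B 0) 0)" by (rule hu_const[OF b0, symmetric])
    also have "\<dots> = hu B" using Beq[symmetric] by (rule arg_cong)
    finally show ?thesis .
  qed
  then have "U [^]\<^bsub>SS\<^esub> (0::nat) \<otimes>\<^bsub>SS\<^esub> hv B = hu B" using hu_closed[OF Bc] by simp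
  moreover have "\<forall>i. up_ring.coeff PR B i = (if i \<le> 0 then up_ring.coeff PR B (0 - i) \<otimes> f [^] (0 - i) else \<zero>)"
    using P.deg_aboveD[OF _ Bc] d0 b0 by auto
  ultimately show ?case using Bc by blast
next
  case (Suc n)
  have Bc: "B \<in> carrier PR" and dB: "deg R B \<le> Suc n" using Suc.prems by auto
  obtain B' where B'c: "B' \<in> carrier PR"
    and Beq: "B = up_ring.monom PR (up_ring.coeff PR B 0) 0 \<oplus>\<^bsub>PR\<^esub> XX \<otimes>\<^bsub>PR\<^esub> B'"
    and cB': "\<And>j. up_ring.coeff PR B' j = up_ring.coeff PR B (Suc j)"
    using P.decomp_gen[OF Bc] by blast
  have dB': "deg R B' \<le> n"
  proof (rule P.deg_aboveI)
    fix m assume "n < m"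
    then have "deg R B < Suc m" using dB by arith
    then show "up_ring.coeff PR B' m = \<zero>" using cB' P.deg_aboveD[OF _ Bc] by simp
  qed (rule B'c)
  obtain B3 where B3c: "B3 \<in> carrier PR" and e3: "U [^]\<^bsub>SS\<^esub> n \<otimes>\<^bsub>SS\<^esub> hv B' = hu B3"
    and c3: "\<forall>i. up_ring.coeff PR B3 i = (if i \<le> n then up_ring.coeff PR B' (n - i) \<otimes> f [^] (n - i) else \<zero>)"
    using Suc.IH[OF B'c dB'] by blast
  define b0 where "b0 = up_ring.coeff PR B 0"
  have b0: "b0 \<in> carrier R" using Bc by (simp add: b0_def)
  define B'' where "B'' = up_ring.monom PR b0 (Suc n) \<oplus>\<^bsub>PR\<^esub> up_ring.monom PR f 0 \<otimes>\<^bsub>PR\<^esub> B3"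
  have B''c: "B'' \<in> carrier PR" using b0 fc B3c by (simp add: B''_def)
  have hB: "hv B = cS b0 \<oplus>\<^bsub>SS\<^esub> V \<otimes>\<^bsub>SS\<^esub> hv B'" unfolding b0_def by (rule hv_decomp[OF Bc B'c Beq])
  have hB'': "hu B'' = cS b0 \<otimes>\<^bsub>SS\<^esub> U [^]\<^bsub>SS\<^esub> Suc n \<oplus>\<^bsub>SS\<^esub> cS f \<otimes>\<^bsub>SS\<^esub> hu B3"
  proof -
    have "hu B'' = hu (up_ring.monom PR b0 (Suc n)) \<oplus>\<^bsub>SS\<^esub> hu (up_ring.monom PR f 0 \<otimes>\<^bsub>PR\<^esub> B3)"
      unfolding B''_def by (rule ring_hom_add[OF hu_hom]) (use b0 fc B3c in simp_all)
    also have "hu (up_ring.monom PR f 0 \<otimes>\<^bsub>PR\<^esub> B3) = cS f \<otimes>\<^bsub>SS\<^esub> hu B3"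
      using ring_hom_mult[OF hu_hom _ B3c, of "up_ring.monom PR f 0"] hu_const[OF fc] fc by simp
    finally show ?thesis using hu_monom[OF b0, of "Suc n"] by simp
  qed
  have Un: "U [^]\<^bsub>SS\<^esub> n \<in> carrier SS" using S.nat_pow_closed[OF U_closed] .
  have pw: "U [^]\<^bsub>SS\<^esub> Suc n = U [^]\<^bsub>SS\<^esub> n \<otimes>\<^bsub>SS\<^esub> U" by (rule S.nat_pow_Suc)
  have "U [^]\<^bsub>SS\<^esub> Suc n \<otimes>\<^bsub>SS\<^esub> hv B
      = cS b0 \<otimes>\<^bsub>SS\<^esub> (U [^]\<^bsub>SS\<^esub> n \<otimes>\<^bsub>SS\<^esub> U) \<oplus>\<^bsub>SS\<^esub> (U \<otimes>\<^bsub>SS\<^esub> V) \<otimes>\<^bsub>SS\<^esub> (U [^]\<^bsub>SS\<^esub> n \<otimes>\<^bsub>SS\<^esub> hv B')"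
    unfolding pw hB using Un U_closed V_closed cS_closed[OF b0] hv_closed[OF B'c] by algebra
  also have "\<dots> = hu B''" unfolding hB'' pw UV e3 ..
  finally have eq: "U [^]\<^bsub>SS\<^esub> Suc n \<otimes>\<^bsub>SS\<^esub> hv B = hu B''" .
  have cB'': "up_ring.coeff PR B'' i = (if Suc n = i then b0 else \<zero>) \<oplus> f \<otimes> up_ring.coeff PR B3 i" for i
    unfolding B''_def using b0 fc B3c by (simp add: P.monom_mult_is_smult[OF fc B3c])
  have "up_ring.coeff PR B'' i = (if i \<le> Suc n then up_ring.coeff PR B (Suc n - i) \<otimes> f [^] (Suc n - i) else \<zero>)" for i
  proof (cases "i = Suc n")
    case True
    then show ?thesis using cB''[of i] c3 b0 B3c fc by (simp add: b0_def)
  next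
    case False
    show ?thesis
    proof (cases "i \<le> n")
      case True
      have e: "Suc n - i = Suc (n - i)" using True by arith
      have cc: "up_ring.coeff PR B (Suc (n - i)) \<in> carrier R" using Bc by simp
      have fp: "f [^] (n - i) \<in> carrier R" using fc by simp
      have "up_ring.coeff PR B'' i = f \<otimes> (up_ring.coeff PR B (Suc (n - i)) \<otimes> f [^] (n - i))"
        using cB''[of i] c3 True False cB' cc fp fc by simp
      also have "\<dots> = up_ring.coeff PR B (Suc (n - i)) \<otimes> (f [^] (n - i) \<otimes> f)"
        using cc fp fc by algebra
      finally show ?thesis using True e by simp
    next
      case False2: False
      then show ?thesis using cB''[of i] c3 False fc by simp
    qed
  qed
  then show ?case using B''c eq by blast
qed

lemma S_carrier_E:
  assumes "x \<in> carrier SS" shows "\<exists>p\<in>carrier QR. x = qp p"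
  using assms unfolding S_ring_def FactRing_simps qp_def by auto

lemma shift:
  assumes x: "x \<in> NF"
  obtains n Bt where "Bt \<in> carrier PR" "U [^]\<^bsub>SS\<^esub> (n::nat) \<otimes>\<^bsub>SS\<^esub> x = hu Bt"
    "n = 0 \<or> (up_ring.coeff PR Bt 0 \<noteq> \<zero> \<and> f divides\<^bsub>R\<^esub> up_ring.coeff PR Bt 0)"
proof -
  obtain A B where A: "A \<in> carrier PR" and B: "B \<in> carrier PR" and B0: "up_ring.coeff PR B 0 = \<zero>"
    and xe: "x = hu A \<oplus>\<^bsub>SS\<^esub> hv B"
    using NF_norm[OF x] by blast
  define n where "n = deg R B"
  obtain B'' where B''c: "B'' \<in> carrier PR" and e'': "U [^]\<^bsub>SS\<^esub> n \<otimes>\<^bsub>SS\<^esub> hv B = hu B''"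
    and c'': "\<forall>i. up_ring.coeff PR B'' i = (if i \<le> n then up_ring.coeff PR B (n - i) \<otimes> f [^] (n - i) else \<zero>)"
    using Un_hv[OF B, of n] by (auto simp: n_def)
  define Bt where "Bt = up_ring.monom PR \<one> n \<otimes>\<^bsub>PR\<^esub> A \<oplus>\<^bsub>PR\<^esub> B''"
  have Btc: "Bt \<in> carrier PR" using A B''c by (simp add: Bt_def)
  have cS1: "cS \<one> = \<one>\<^bsub>SS\<^esub>" using hu_const[OF one_closed] ring_hom_one[OF hu_hom] by simp
  have Un: "U [^]\<^bsub>SS\<^esub> n \<in> carrier SS" using S.nat_pow_closed[OF U_closed] .
  have "hu Bt = hu (up_ring.monom PR \<one> n) \<otimes>\<^bsub>SS\<^esub> hu A \<oplus>\<^bsub>SS\<^esub> hu B''"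
    unfolding Bt_def using ring_hom_add[OF hu_hom, of "up_ring.monom PR \<one> n \<otimes>\<^bsub>PR\<^esub> A" B'']
      ring_hom_mult[OF hu_hom, of "up_ring.monom PR \<one> n" A] A B''c by simp
  also have "\<dots> = U [^]\<^bsub>SS\<^esub> n \<otimes>\<^bsub>SS\<^esub> hu A \<oplus>\<^bsub>SS\<^esub> U [^]\<^bsub>SS\<^esub> n \<otimes>\<^bsub>SS\<^esub> hv B"
    using hu_monom[OF one_closed, of n] cS1 Un e'' by simp
  also have "\<dots> = U [^]\<^bsub>SS\<^esub> n \<otimes>\<^bsub>SS\<^esub> x"
    unfolding xe using Un hu_closed[OF A] hv_closed[OF B] by algebra
  finally have ex: "U [^]\<^bsub>SS\<^esub> n \<otimes>\<^bsub>SS\<^esub> x = hu Bt" ..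
  have "n = 0 \<or> (up_ring.coeff PR Bt 0 \<noteq> \<zero> \<and> f divides\<^bsub>R\<^esub> up_ring.coeff PR Bt 0)"
  proof (cases "n = 0")
    case True then show ?thesis by simp
  next
    case False
    have l: "up_ring.coeff PR (up_ring.monom PR \<one> n \<otimes>\<^bsub>PR\<^esub> A) 0 = \<zero>"
      by (rule P.coeff_monom_mult_low[OF one_closed A]) (use False in simp)
    have cB: "up_ring.coeff PR B n \<in> carrier R" using B by simp
    have ct: "up_ring.coeff PR Bt 0 = up_ring.coeff PR B n \<otimes> f [^] n"
      unfolding Bt_def using l c'' A B''c cB fc by simp
    have lnz: "up_ring.coeff PR B n \<noteq> \<zero>" using P.lcoeff_nonzero_deg[OF _ B] False by (simp add: n_def)
    have "up_ring.coeff PR B n \<otimes> f [^] n \<noteq> \<zero>"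
      using integral_iff[OF cB nat_pow_closed[OF fc]] lnz fpow_nz by simp
    moreover have "f divides\<^bsub>R\<^esub> up_ring.coeff PR B n \<otimes> f [^] n"
    proof -
      obtain k where k: "n = Suc k" using False by (cases n) auto
      have fk: "f [^] n = f [^] k \<otimes> f" unfolding k by (rule nat_pow_Suc)
      have fkc: "f [^] k \<in> carrier R" using nat_pow_closed[OF fc] .
      have "up_ring.coeff PR B n \<otimes> f [^] n = f \<otimes> (up_ring.coeff PR B n \<otimes> f [^] k)"
        unfolding fk using cB fc fkc by algebra
      then show ?thesis by (rule dividesI[rotated]) (use cB fc in simp)
    qed
    ultimately show ?thesis using ct by simp
  qed
  then show ?thesis using that[OF Btc ex] by blast
qed

end

context lctx
begin

interpretation S: cring SS by (rule S_cring)

lemma core: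
  assumes a: "a \<in> carrier R" and anz: "a \<noteq> \<zero>" and b: "b \<in> carrier SS" and c: "c \<in> carrier SS"
    and bc: "b \<otimes>\<^bsub>SS\<^esub> c = cS a"
  shows "f divides\<^bsub>R\<^esub> a \<or> (\<exists>\<beta>\<in>carrier R. \<exists>\<gamma>\<in>carrier R. b = cS \<beta> \<and> a = \<beta> \<otimes> \<gamma>)"
proof -
  have bN: "b \<in> NF" using S_carrier_E[OF b] F1 by auto
  have cN: "c \<in> NF" using S_carrier_E[OF c] F1 by auto
  obtain n Bt where Btc: "Bt \<in> carrier PR" and eb: "U [^]\<^bsub>SS\<^esub> (n::nat) \<otimes>\<^bsub>SS\<^esub> b = hu Bt"
    and hn: "n = 0 \<or> (up_ring.coeff PR Bt 0 \<noteq> \<zero> \<and> f divides\<^bsub>R\<^esub> up_ring.coeff PR Bt 0)"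
    by (rule shift[OF bN])
  obtain m Ct where Ctc: "Ct \<in> carrier PR" and ec: "U [^]\<^bsub>SS\<^esub> (m::nat) \<otimes>\<^bsub>SS\<^esub> c = hu Ct"
    and hm: "m = 0 \<or> (up_ring.coeff PR Ct 0 \<noteq> \<zero> \<and> f divides\<^bsub>R\<^esub> up_ring.coeff PR Ct 0)"
    by (rule shift[OF cN])
  have Un: "U [^]\<^bsub>SS\<^esub> n \<in> carrier SS" using S.nat_pow_closed[OF U_closed] .
  have Um: "U [^]\<^bsub>SS\<^esub> m \<in> carrier SS" using S.nat_pow_closed[OF U_closed] .
  have "hu (Bt \<otimes>\<^bsub>PR\<^esub> Ct) = hu (up_ring.monom PR a (n + m))"
  proof -
    have "hu (Bt \<otimes>\<^bsub>PR\<^esub> Ct) = hu Bt \<otimes>\<^bsub>SS\<^esub> hu Ct" by (rule ring_hom_mult[OF hu_hom Btc Ctc])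
    also have "\<dots> = (U [^]\<^bsub>SS\<^esub> n \<otimes>\<^bsub>SS\<^esub> b) \<otimes>\<^bsub>SS\<^esub> (U [^]\<^bsub>SS\<^esub> m \<otimes>\<^bsub>SS\<^esub> c)" using eb ec by simp
    also have "\<dots> = (b \<otimes>\<^bsub>SS\<^esub> c) \<otimes>\<^bsub>SS\<^esub> (U [^]\<^bsub>SS\<^esub> n \<otimes>\<^bsub>SS\<^esub> U [^]\<^bsub>SS\<^esub> m)"
      using Un Um b c by algebra
    also have "\<dots> = cS a \<otimes>\<^bsub>SS\<^esub> U [^]\<^bsub>SS\<^esub> (n + m)" using bc S.nat_pow_mult[OF U_closed] by simp
    also have "\<dots> = hu (up_ring.monom PR a (n + m))" using hu_monom[OF a] by simp
    finally show ?thesis .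
  qed
  then have pe: "Bt \<otimes>\<^bsub>PR\<^esub> Ct = up_ring.monom PR a (n + m)"
    by (rule hu_inj[OF P.UP_mult_closed[OF Btc Ctc] P.monom_closed[OF a]])
  have pe': "Ct \<otimes>\<^bsub>PR\<^esub> Bt = up_ring.monom PR a (n + m)"
    using pe P.P.m_comm[OF Btc Ctc] by simp
  define \<beta> where "\<beta> = up_ring.coeff PR Bt (deg R Bt)"
  define k where "k = deg R Bt"
  define \<gamma> where "\<gamma> = up_ring.coeff PR Ct (deg R Ct)"
  define l where "l = deg R Ct"
  have \<beta>c: "\<beta> \<in> carrier R" using Btc by (simp add: \<beta>_def)
  have \<gamma>c: "\<gamma> \<in> carrier R" using Ctc by (simp add: \<gamma>_def)
  have Bteq: "Bt = up_ring.monom PR \<beta> k"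
    unfolding \<beta>_def k_def by (rule P.mono_factor[OF Btc Ctc a anz pe])
  have Cteq: "Ct = up_ring.monom PR \<gamma> l"
    unfolding \<gamma>_def l_def by (rule P.mono_factor[OF Ctc Btc a anz pe'])
  have "up_ring.monom PR (\<beta> \<otimes> \<gamma>) (k + l) = up_ring.monom PR a (n + m)"
    using pe P.monom_mult[OF \<beta>c \<gamma>c, of k l] Bteq Cteq by simp
  then have "up_ring.coeff PR (up_ring.monom PR (\<beta> \<otimes> \<gamma>) (k + l)) (n + m) = up_ring.coeff PR (up_ring.monom PR a (n + m)) (n + m)"
    by (rule arg_cong)
  then have "up_ring.coeff PR (up_ring.monom PR (\<beta> \<otimes> \<gamma>) (k + l)) (n + m) = a"
    using a by (simp del: P.monom_mult)
  moreover have "up_ring.coeff PR (up_ring.monom PR (\<beta> \<otimes> \<gamma>) (k + l)) (n + m) = (if k + l = n + m then \<beta> \<otimes> \<gamma> else \<zero>)"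
    by (rule P.coeff_monom) (use \<beta>c \<gamma>c in simp)
  ultimately have ite: "(if k + l = n + m then \<beta> \<otimes> \<gamma> else \<zero>) = a" by simp
  then have kl: "k + l = n + m" using anz by (auto split: if_splits)
  then have ab: "a = \<beta> \<otimes> \<gamma>" using ite by simp
  show ?thesis
  proof (cases "n = 0 \<and> m = 0")
    case True
    then have "k = 0" using kl by simp
    have "b = U [^]\<^bsub>SS\<^esub> n \<otimes>\<^bsub>SS\<^esub> b" using True b by simp
    also have "\<dots> = hu (up_ring.monom PR \<beta> 0)" using eb Bteq \<open>k = 0\<close> by simp
    also have "\<dots> = cS \<beta>" by (rule hu_const[OF \<beta>c])
    finally show ?thesis using \<beta>c \<gamma>c ab by blast
  next
    case False
    then have "n \<noteq> 0 \<or> m \<noteq> 0" by simp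
    then have "f divides\<^bsub>R\<^esub> a"
    proof
      assume "n \<noteq> 0"
      then have nz: "up_ring.coeff PR Bt 0 \<noteq> \<zero>" and fd: "f divides\<^bsub>R\<^esub> up_ring.coeff PR Bt 0" using hn by auto
      have "up_ring.coeff PR Bt 0 = (if k = 0 then \<beta> else \<zero>)" using Bteq \<beta>c by simp
      then have "up_ring.coeff PR Bt 0 = \<beta>" using nz by (simp split: if_splits)
      then have "f divides\<^bsub>R\<^esub> \<beta>" using fd by simp
      then have "f divides\<^bsub>R\<^esub> \<beta> \<otimes> \<gamma>" using divides_prod_r[OF _ fc \<gamma>c] by blast
      then show ?thesis using ab by simp
    next
      assume "m \<noteq> 0"
      then have nz: "up_ring.coeff PR Ct 0 \<noteq> \<zero>" and fd: "f divides\<^bsub>R\<^esub> up_ring.coeff PR Ct 0" using hm by auto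
      have "up_ring.coeff PR Ct 0 = (if l = 0 then \<gamma> else \<zero>)" using Cteq \<gamma>c by simp
      then have "up_ring.coeff PR Ct 0 = \<gamma>" using nz by (simp split: if_splits)
      then have "f divides\<^bsub>R\<^esub> \<gamma>" using fd by simp
      then have "f divides\<^bsub>R\<^esub> \<beta> \<otimes> \<gamma>" using divides_prod_l[OF fc \<gamma>c \<beta>c] by blast
      then show ?thesis using ab by simp
    qed
    then show ?thesis by blast
  qed
qed

lemma K_hom: "(hu \<circ> (\<lambda>r. up_ring.monom PR r 0)) \<in> ring_hom R SS"
  by (rule ring_hom_trans[OF P.const_ring_hom hu_hom])

lemma cS_mult: "x \<in> carrier R \<Longrightarrow> y \<in> carrier R \<Longrightarrow> cS (x \<otimes> y) = cS x \<otimes>\<^bsub>SS\<^esub> cS y"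
  using ring_hom_mult[OF K_hom, of x y] by (simp add: hu_const)
lemma cS_one: "cS \<one> = \<one>\<^bsub>SS\<^esub>"
  using ring_hom_one[OF hu_hom] hu_const[OF one_closed] by simp
lemma cS_zero: "cS \<zero> = \<zero>\<^bsub>SS\<^esub>"
  using ring_hom_zero[OF hu_hom P.UP_ring S.ring_axioms] hu_const[OF zero_closed] by simp

lemma mult_const:
  assumes a: "a \<in> carrier R" and A: "A \<in> carrier PR" and B: "B \<in> carrier PR"
  shows "cS a \<otimes>\<^bsub>SS\<^esub> (hu A \<oplus>\<^bsub>SS\<^esub> hv B)
     = hu (up_ring.monom PR a 0 \<otimes>\<^bsub>PR\<^esub> A) \<oplus>\<^bsub>SS\<^esub> hv (up_ring.monom PR a 0 \<otimes>\<^bsub>PR\<^esub> B)"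
proof -
  have ma: "up_ring.monom PR a 0 \<in> carrier PR" using a by simp
  have "cS a \<otimes>\<^bsub>SS\<^esub> (hu A \<oplus>\<^bsub>SS\<^esub> hv B) = cS a \<otimes>\<^bsub>SS\<^esub> hu A \<oplus>\<^bsub>SS\<^esub> cS a \<otimes>\<^bsub>SS\<^esub> hv B"
    using cS_closed[OF a] hu_closed[OF A] hv_closed[OF B] by algebra
  also have "cS a \<otimes>\<^bsub>SS\<^esub> hu A = hu (up_ring.monom PR a 0 \<otimes>\<^bsub>PR\<^esub> A)"
    using ring_hom_mult[OF hu_hom ma A] hu_const[OF a] by simp
  also have "cS a \<otimes>\<^bsub>SS\<^esub> hv B = hv (up_ring.monom PR a 0 \<otimes>\<^bsub>PR\<^esub> B)"
    using ring_hom_mult[OF hv_hom ma B] hv_const[OF a] by simp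
  finally show ?thesis .
qed

lemma cS_divides:
  assumes a: "a \<in> carrier R" and b: "b \<in> carrier R"
  shows "(cS a divides\<^bsub>SS\<^esub> cS b) = (a divides\<^bsub>R\<^esub> b)"
proof
  assume "a divides\<^bsub>R\<^esub> b"
  then obtain c where c: "c \<in> carrier R" and bc: "b = a \<otimes> c" by (rule dividesE) auto
  show "cS a divides\<^bsub>SS\<^esub> cS b"
    by (rule dividesI[OF cS_closed[OF c]]) (simp add: bc cS_mult[OF a c])
next
  assume "cS a divides\<^bsub>SS\<^esub> cS b"
  then obtain s where s: "s \<in> carrier SS" and bs: "cS b = cS a \<otimes>\<^bsub>SS\<^esub> s" by (rule dividesE) auto
  have sN: "s \<in> NF" using S_carrier_E[OF s] F1 by auto
  obtain A B where A: "A \<in> carrier PR" and B: "B \<in> carrier PR" and B0: "up_ring.coeff PR B 0 = \<zero>"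
    and se: "s = hu A \<oplus>\<^bsub>SS\<^esub> hv B"
    using NF_norm[OF sN] by blast
  have ma: "up_ring.monom PR a 0 \<in> carrier PR" using a by simp
  have mb: "up_ring.monom PR b 0 \<in> carrier PR" using b by simp
  have "hu (up_ring.monom PR b 0) \<oplus>\<^bsub>SS\<^esub> hv \<zero>\<^bsub>PR\<^esub>
      = hu (up_ring.monom PR a 0 \<otimes>\<^bsub>PR\<^esub> A) \<oplus>\<^bsub>SS\<^esub> hv (up_ring.monom PR a 0 \<otimes>\<^bsub>PR\<^esub> B)"
    using bs mult_const[OF a A B] se hu_const[OF b] hv_zero cS_closed[OF b] by simp
  moreover have "up_ring.coeff PR (up_ring.monom PR a 0 \<otimes>\<^bsub>PR\<^esub> B) 0 = \<zero>"
    using B0 a B by (simp add: P.monom_mult_is_smult[OF a B])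
  ultimately have "up_ring.monom PR b 0 = up_ring.monom PR a 0 \<otimes>\<^bsub>PR\<^esub> A"
    using F2[OF mb _ _ _ _ _, of "\<zero>\<^bsub>PR\<^esub>" "up_ring.monom PR a 0 \<otimes>\<^bsub>PR\<^esub> A" "up_ring.monom PR a 0 \<otimes>\<^bsub>PR\<^esub> B"]
      ma A B by simp
  then have "up_ring.coeff PR (up_ring.monom PR b 0) 0 = up_ring.coeff PR (up_ring.monom PR a 0 \<otimes>\<^bsub>PR\<^esub> A) 0"
    by simp
  then have "b = a \<otimes> up_ring.coeff PR A 0" using a b A by (simp add: P.monom_mult_is_smult[OF a A])
  then show "a divides\<^bsub>R\<^esub> b" by (rule dividesI[rotated]) (use A in simp)
qed

lemma cS_unit:
  assumes a: "a \<in> carrier R"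
  shows "(cS a \<in> Units SS) = (a \<in> Units R)"
  using S.Unit_eq_dividesone[OF cS_closed[OF a]] Unit_eq_dividesone[OF a]
    cS_divides[OF a one_closed] cS_one by simp

lemma cS_nz:
  assumes a: "a \<in> carrier R"
  shows "(cS a = \<zero>\<^bsub>SS\<^esub>) = (a = \<zero>)"
proof
  assume "cS a = \<zero>\<^bsub>SS\<^esub>"
  then have e0: "hu (up_ring.monom PR a 0) = hu \<zero>\<^bsub>PR\<^esub>"
    using hu_const[OF a] ring_hom_zero[OF hu_hom P.UP_ring S.ring_axioms] by simp
  have "up_ring.monom PR a 0 = \<zero>\<^bsub>PR\<^esub>" by (rule hu_inj[OF _ _ e0]) (use a in simp_all)
  then have "up_ring.coeff PR (up_ring.monom PR a 0) 0 = \<zero>" by simp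
  then show "a = \<zero>" using a by simp
next
  assume "a = \<zero>" then show "cS a = \<zero>\<^bsub>SS\<^esub>" using cS_zero by simp
qed

lemma main:
  assumes a: "a \<in> carrier R"
  shows "(ring_irreducible\<^bsub>SS\<^esub> (to_S R f a) \<longrightarrow> ring_irreducible\<^bsub>R\<^esub> a)
       \<and> (ring_irreducible\<^bsub>R\<^esub> a \<and> \<not> (a \<sim>\<^bsub>R\<^esub> f)
            \<longrightarrow> ring_irreducible\<^bsub>SS\<^esub> (to_S R f a))"
proof (intro conjI impI)
  assume irr: "ring_irreducible\<^bsub>SS\<^esub> (to_S R f a)"
  then have nz: "cS a \<noteq> \<zero>\<^bsub>SS\<^esub>" and ir: "irreducible SS (cS a)"
    unfolding ring_irreducible_def cS_def by auto
  show "ring_irreducible\<^bsub>R\<^esub> a"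
    unfolding ring_irreducible_def irreducible_def
  proof (intro conjI ballI impI)
    show "a \<noteq> \<zero>" using nz cS_nz[OF a] by simp
    show "a \<notin> Units R" using ir cS_unit[OF a] unfolding irreducible_def by simp
  next
    fix b assume b: "b \<in> carrier R" and pf: "properfactor R b a"
    have "properfactor SS (cS b) (cS a)"
      using pf cS_divides[OF b a] cS_divides[OF a b] unfolding properfactor_def by simp
    then have "cS b \<in> Units SS" using ir cS_closed[OF b] unfolding irreducible_def by blast
    then show "b \<in> Units R" using cS_unit[OF b] by simp
  qed
next
  assume "ring_irreducible\<^bsub>R\<^esub> a \<and> \<not> a \<sim>\<^bsub>R\<^esub> f"
  then have anz: "a \<noteq> \<zero>" and ir: "irreducible R a" and na: "\<not> a \<sim>\<^bsub>R\<^esub> f"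
    unfolding ring_irreducible_def by auto
  show "ring_irreducible\<^bsub>SS\<^esub> (to_S R f a)"
    unfolding ring_irreducible_def irreducible_def cS_def[symmetric]
  proof (intro conjI ballI impI)
    show "cS a \<noteq> \<zero>\<^bsub>SS\<^esub>" using anz cS_nz[OF a] by simp
    show "cS a \<notin> Units SS" using ir cS_unit[OF a] unfolding irreducible_def by simp
  next
    fix b assume b: "b \<in> carrier SS" and pf: "properfactor SS b (cS a)"
    then have bd: "b divides\<^bsub>SS\<^esub> cS a" and nd: "\<not> cS a divides\<^bsub>SS\<^esub> b" unfolding properfactor_def by auto
    obtain c where bc: "cS a = b \<otimes>\<^bsub>SS\<^esub> c" and c: "c \<in> carrier SS" using bd by (rule dividesE)
    from core[OF a anz b c bc[symmetric]]
    show "b \<in> Units SS"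
    proof
      assume fa: "f divides\<^bsub>R\<^esub> a"
      show ?thesis
      proof (cases "a divides\<^bsub>R\<^esub> f")
        case True then have "a \<sim>\<^bsub>R\<^esub> f" using fa unfolding associated_def by simp
        with na show ?thesis by simp
      next
        case False
        then have "properfactor R f a" using fa unfolding properfactor_def by simp
        then have "f \<in> Units R" using ir fc unfolding irreducible_def by blast
        with fnu show ?thesis by simp
      qed
    next
      assume "\<exists>\<beta>\<in>carrier R. \<exists>\<gamma>\<in>carrier R. b = cS \<beta> \<and> a = \<beta> \<otimes> \<gamma>"
      then obtain \<beta> \<gamma> where \<beta>: "\<beta> \<in> carrier R" and \<gamma>: "\<gamma> \<in> carrier R" and b\<beta>: "b = cS \<beta>"
        and a\<beta>: "a = \<beta> \<otimes> \<gamma>" by blast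
      have bda: "\<beta> divides\<^bsub>R\<^esub> a" by (rule dividesI[OF \<gamma> a\<beta>])
      show ?thesis
      proof (cases "a divides\<^bsub>R\<^esub> \<beta>")
        case True
        then have "cS a divides\<^bsub>SS\<^esub> b" using cS_divides[OF a \<beta>] b\<beta> by simp
        with nd show ?thesis by simp
      next
        case False
        then have "properfactor R \<beta> a" using bda unfolding properfactor_def by simp
        then have "\<beta> \<in> Units R" using ir \<beta> unfolding irreducible_def by blast
        then show ?thesis using cS_unit[OF \<beta>] b\<beta> by simp
      qed
    qed
  qed
qed

end

theorem lemma1p4:
  fixes R :: "('a, 'm) ring_scheme" and f a :: 'a
  assumes "domain R"
    and "f \<in> carrier R" and "f \<noteq> \<zero>\<^bsub>R\<^esub>" and "f \<notin> Units R"
    and "a \<in> carrier R"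
  shows "(ring_irreducible\<^bsub>S_ring R f\<^esub> (to_S R f a) \<longrightarrow> ring_irreducible\<^bsub>R\<^esub> a)
       \<and> (ring_irreducible\<^bsub>R\<^esub> a \<and> \<not> (a \<sim>\<^bsub>R\<^esub> f)
            \<longrightarrow> ring_irreducible\<^bsub>S_ring R f\<^esub> (to_S R f a))"
proof -
  interpret L: lctx R f by (rule lctx.intro) (use assms in auto)
  show ?thesis by (rule L.main[OF assms(5)])
qed

end
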